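(* With $n=2p+1$ agents and complete information, the Majority voting mechanism with Random confirmations (RC mechanism) subgame perfect implements the majority rule: for every preference profile $R$, every subgame-perfect equilibrium yields the outcome $Maj(R)$, and some subgame-perfect equilibrium yields $Maj(R)$.
   Context: Agents $I=\{1,\dots,n\}$, $n=2p+1$, options $A=\{a,b\}$, strict preferences over $A$, commonly known. Majority rule: $Maj(R)=a$ if at least $p+1$ agents prefer $a$, else $b$. Lotteries are compared by stochastic dominance: an agent preferring $x$ weakly (strictly) prefers $\beta$ to $\eta$ iff $\beta(x)\ge\eta(x)$ ($>$). RC mechanism: Voting stage: each agent simultaneously votes $v_i\in A$; the profile $v$ is publicly announced; the option with more votes is the Voting-stage winner. Confirmation stage: a set of $p+1$ agents is drawn uniformly at random and ordered uniformly, $\pi=(\pi_1,\dots,\pi_{p+1})$; sequentially, as long as nobody has announced $Y$, agent $\pi_t$ announces $Y$ or $N$. If some agent announces $Y$ the game ends and the outcome is the Voting-stage winner. If all $p+1$ announce $N$ the outcome is the lottery $\beta(v)$ with $\beta_a(v)=|\{i:v_i=a\}|/n$ and $\beta_b(v)=1-\beta_a(v)$. A subgame-perfect equilibrium is a strategy profile such that at every nonterminal history no agent can obtain a strictly SD-preferred outcome lottery by a unilateral deviation. *)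

theory Defs
  imports Complex_Main
begin

text \<open>Agents are 0,...,n-1 with n = 2p+1.  The two options a and b.\<close>
datatype opt = OA | OB

type_synonym lottery = "opt \<Rightarrow> real"

definition n_agents :: "nat \<Rightarrow> nat" where
  "n_agents p = 2 * p + 1"

definition pure :: "opt \<Rightarrow> lottery" where
  "pure x = (\<lambda>y. if y = x then 1 else 0)"

text \<open>Strict stochastic-dominance preference of agent i (whose preferred option is R i):
  beta is strictly preferred to eta iff beta(R i) > eta(R i).\<close>
definition sd_strict :: "(nat \<Rightarrow> opt) \<Rightarrow> nat \<Rightarrow> lottery \<Rightarrow> lottery \<Rightarrow> bool" where
  "sd_strict R i \<beta> \<eta> \<longleftrightarrow> \<beta> (R i) > \<eta> (R i)"

text \<open>Majority rule; R i is the option agent i prefers.\<close>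
definition Maj :: "nat \<Rightarrow> (nat \<Rightarrow> opt) \<Rightarrow> opt" where
  "Maj p R = (if card {i. i < n_agents p \<and> R i = OA} \<ge> p + 1 then OA else OB)"

text \<open>Vote profiles are lists of length n (entry i is agent i's vote).\<close>
definition vcount :: "opt \<Rightarrow> opt list \<Rightarrow> nat" where
  "vcount x v = card {i. i < length v \<and> v ! i = x}"

definition winner :: "opt list \<Rightarrow> opt" where
  "winner v = (if vcount OA v > vcount OB v then OA else OB)"

definition beta :: "opt list \<Rightarrow> lottery" where
  "beta v = (\<lambda>y. real (vcount y v) / real (length v))"

text \<open>Ordered committees: sequences of p+1 distinct agents; drawing a uniform (p+1)-subset
  and ordering it uniformly is the uniform distribution on this set.\<close>
definition Comms :: "nat \<Rightarrow> nat list set" where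
  "Comms p = {\<pi>. distinct \<pi> \<and> length \<pi> = p + 1 \<and> set \<pi> \<subseteq> {..<n_agents p}}"

text \<open>Confirmation-stage strategies: \<sigma> i v \<pi> t is the announcement (True = Y, False = N)
  of agent i at the history where votes v were cast, committee \<pi> was drawn, and
  positions 0..t-1 of \<pi> announced N (so it is relevant when \<pi> ! t = i).\<close>
type_synonym cstrat = "nat \<Rightarrow> opt list \<Rightarrow> nat list \<Rightarrow> nat \<Rightarrow> bool"

primrec conf_aux :: "cstrat \<Rightarrow> opt list \<Rightarrow> nat list \<Rightarrow> nat \<Rightarrow> nat \<Rightarrow> lottery" where
  "conf_aux \<sigma> v \<pi> t 0 = beta v"
| "conf_aux \<sigma> v \<pi> t (Suc m) =
     (if \<sigma> (\<pi> ! t) v \<pi> t then pure (winner v) else conf_aux \<sigma> v \<pi> (Suc t) m)"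

definition conf_out :: "cstrat \<Rightarrow> opt list \<Rightarrow> nat list \<Rightarrow> nat \<Rightarrow> lottery" where
  "conf_out \<sigma> v \<pi> t = conf_aux \<sigma> v \<pi> t (length \<pi> - t)"

definition chance_out :: "nat \<Rightarrow> cstrat \<Rightarrow> opt list \<Rightarrow> lottery" where
  "chance_out p \<sigma> v = (\<lambda>y. (\<Sum>\<pi>\<in>Comms p. conf_out \<sigma> v \<pi> 0 y) / real (card (Comms p)))"

definition votes :: "nat \<Rightarrow> (nat \<Rightarrow> opt) \<Rightarrow> opt list" where
  "votes p \<sigma>v = map \<sigma>v [0..<n_agents p]"

definition root_out :: "nat \<Rightarrow> (nat \<Rightarrow> opt) \<Rightarrow> cstrat \<Rightarrow> lottery" where
  "root_out p \<sigma>v \<sigma>c = chance_out p \<sigma>c (votes p \<sigma>v)"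

text \<open>Subgame-perfect equilibrium: at every nonterminal history (the root, each chance node
  after a vote profile, each confirmation decision node) no agent has a unilateral
  deviation yielding a strictly SD-preferred outcome lottery.\<close>
definition is_SPE :: "nat \<Rightarrow> (nat \<Rightarrow> opt) \<Rightarrow> (nat \<Rightarrow> opt) \<Rightarrow> cstrat \<Rightarrow> bool" where
  "is_SPE p R \<sigma>v \<sigma>c \<longleftrightarrow>
     (\<forall>i < n_agents p. \<forall>x f.
        \<not> sd_strict R i (root_out p (\<sigma>v(i := x)) (\<sigma>c(i := f))) (root_out p \<sigma>v \<sigma>c)) \<and>
     (\<forall>v. length v = n_agents p \<longrightarrow> (\<forall>i < n_agents p. \<forall>f.
        \<not> sd_strict R i (chance_out p (\<sigma>c(i := f)) v) (chance_out p \<sigma>c v))) \<and>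
     (\<forall>v \<pi> t. length v = n_agents p \<and> \<pi> \<in> Comms p \<and> t < p + 1 \<longrightarrow> (\<forall>i < n_agents p. \<forall>f.
        \<not> sd_strict R i (conf_out (\<sigma>c(i := f)) v \<pi> t) (conf_out \<sigma>c v \<pi> t)))"

end

theory Submission
  imports Defs
begin


definition ok :: "(nat \<Rightarrow> opt) \<Rightarrow> opt list \<Rightarrow> nat list \<Rightarrow> nat \<Rightarrow> bool" where
  "ok R v \<pi> t = (\<exists>s. t \<le> s \<and> s < length \<pi> \<and> R (\<pi>!s) = winner v)"

definition FF :: "(nat \<Rightarrow> opt) \<Rightarrow> opt list \<Rightarrow> nat list \<Rightarrow> nat \<Rightarrow> lottery" where
  "FF R v \<pi> t = (if ok R v \<pi> t then pure (winner v) else beta v)"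

lemma conf_aux_Y:
  "t \<le> s \<Longrightarrow> s < t + m \<Longrightarrow> \<sigma> (\<pi>!s) v \<pi> s \<Longrightarrow> conf_aux \<sigma> v \<pi> t m = pure (winner v)"
proof (induction m arbitrary: t)
  case 0 then show ?case by simp
next
  case (Suc m)
  show ?case
  proof (cases "\<sigma> (\<pi>!t) v \<pi> t")
    case True then show ?thesis by simp
  next
    case False
    then have "s \<noteq> t" using Suc.prems by auto
    then show ?thesis using False Suc.prems Suc.IH[of "Suc t"] by simp
  qed
qed

lemma conf_aux_N:
  "(\<forall>s. t \<le> s \<longrightarrow> s < t + m \<longrightarrow> \<not> \<sigma> (\<pi>!s) v \<pi> s) \<Longrightarrow> conf_aux \<sigma> v \<pi> t m = beta v"
proof (induction m arbitrary: t)
  case 0 then show ?case by simp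
next
  case (Suc m)
  have "\<not> \<sigma> (\<pi>!t) v \<pi> t" using Suc.prems by auto
  moreover have "conf_aux \<sigma> v \<pi> (Suc t) m = beta v" using Suc.prems by (intro Suc.IH) auto
  ultimately show ?case by simp
qed

lemma conf_aux_cases: "conf_aux \<sigma> v \<pi> t m = pure (winner v) \<or> conf_aux \<sigma> v \<pi> t m = beta v"
  by (induction m arbitrary: t) auto

lemma conf_out_cases: "conf_out \<sigma> v \<pi> t = pure (winner v) \<or> conf_out \<sigma> v \<pi> t = beta v"
  unfolding conf_out_def by (rule conf_aux_cases)

lemma conf_aux_upd:
  "(\<forall>s. t \<le> s \<longrightarrow> s < t + m \<longrightarrow> \<pi>!s \<noteq> i) \<Longrightarrow> conf_aux (\<sigma>(i:=f)) v \<pi> t m = conf_aux \<sigma> v \<pi> t m"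
proof (induction m arbitrary: t)
  case 0 then show ?case by simp
next
  case (Suc m)
  have "\<pi>!t \<noteq> i" using Suc.prems by auto
  moreover have "conf_aux (\<sigma>(i:=f)) v \<pi> (Suc t) m = conf_aux \<sigma> v \<pi> (Suc t) m"
    using Suc.prems by (intro Suc.IH) auto
  ultimately show ?case by (simp del: fun_upd_apply add: fun_upd_other)
qed

lemma conf_out_upd:
  "(\<forall>s. t \<le> s \<longrightarrow> s < length \<pi> \<longrightarrow> \<pi>!s \<noteq> i) \<Longrightarrow> conf_out (\<sigma>(i:=f)) v \<pi> t = conf_out \<sigma> v \<pi> t"
  unfolding conf_out_def by (rule conf_aux_upd) auto

lemma conf_out_step:
  "t < length \<pi> \<Longrightarrow> conf_out \<sigma> v \<pi> t =
    (if \<sigma> (\<pi>!t) v \<pi> t then pure (winner v) else conf_out \<sigma> v \<pi> (Suc t))"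
proof -
  assume "t < length \<pi>"
  then have "length \<pi> - t = Suc (length \<pi> - Suc t)" by simp
  then show ?thesis unfolding conf_out_def by simp
qed

lemma conf_out_end: "conf_out \<sigma> v \<pi> (length \<pi>) = beta v"
  unfolding conf_out_def by simp

lemma vcount_le: "vcount x v \<le> length v"
proof -
  have "{i. i < length v \<and> v ! i = x} \<subseteq> {..<length v}" by auto
  then show ?thesis unfolding vcount_def by (metis card_lessThan card_mono finite_lessThan)
qed

lemma vcount_sum: "vcount OA v + vcount OB v = length v"
proof -
  have "{i. i < length v \<and> v ! i = OA} \<union> {i. i < length v \<and> v ! i = OB} = {..<length v}"
    using opt.exhaust by auto
  moreover have "{i. i < length v \<and> v ! i = OA} \<inter> {i. i < length v \<and> v ! i = OB} = {}" by auto
  ultimately show ?thesis unfolding vcount_def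
    by (metis (no_types, lifting) card_Un_disjoint card_lessThan finite_Un finite_lessThan)
qed

lemma card_split: "card {j. j < N \<and> P j} + card {j. j < N \<and> \<not> P j} = N"
proof -
  have "{j. j < N \<and> P j} \<union> {j. j < N \<and> \<not> P j} = {..<N}" by auto
  moreover have "{j. j < N \<and> P j} \<inter> {j. j < N \<and> \<not> P j} = {}" by auto
  ultimately show ?thesis
    by (metis (no_types, lifting) card_Un_disjoint card_lessThan finite_Un finite_lessThan)
qed

lemma beta_nonneg: "beta v y \<ge> 0" unfolding beta_def by simp
lemma beta_le1: "beta v y \<le> 1" unfolding beta_def using vcount_le[of y v]
  by (cases "length v = 0") (auto simp: divide_le_eq_1)
lemma pure_le1: "pure x y \<le> 1" unfolding pure_def by simp
lemma pure_nonneg: "pure x y \<ge> 0" unfolding pure_def by simp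
lemma conf_out_le1: "conf_out \<sigma> v \<pi> t y \<le> 1"
  using conf_out_cases[of \<sigma> v \<pi> t] beta_le1 pure_le1 by metis
lemma conf_out_nonneg: "conf_out \<sigma> v \<pi> t y \<ge> 0"
  using conf_out_cases[of \<sigma> v \<pi> t] beta_nonneg pure_nonneg by metis

lemma beta_not_pure:
  assumes "length v > 0" "beta v \<noteq> pure w" "x \<noteq> w"
  shows "beta v w < 1" "beta v x > 0"
proof -
  have s: "beta v OA + beta v OB = 1" using vcount_sum[of v] assms(1)
    unfolding beta_def by (simp add: add_divide_distrib[symmetric])
  have "beta v w \<noteq> 1"
  proof
    assume h: "beta v w = 1"
    have "beta v = pure w"
    proof
      fix y show "beta v y = pure w y" using s h assms(3) by (cases y; cases w; cases x) (auto simp: pure_def)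
    qed
    then show False using assms(2) by simp
  qed
  then show "beta v w < 1" using beta_le1[of v w] by simp
  then show "beta v x > 0" using s assms(3) by (cases w; cases x) auto
qed



lemma ok_step: "t < length \<pi> \<Longrightarrow> ok R v \<pi> t = (R (\<pi>!t) = winner v \<or> ok R v \<pi> (Suc t))"
  unfolding ok_def by (metis Suc_leI le_SucI le_antisym not_less_eq_eq order_refl)

lemma ok_end: "\<not> ok R v \<pi> (length \<pi>)" unfolding ok_def by auto

lemma spe_conf:
  assumes spe: "\<forall>t<length \<pi>. \<forall>f. \<not> sd_strict R (\<pi>!t) (conf_out (\<sigma>(\<pi>!t := f)) v \<pi> t) (conf_out \<sigma> v \<pi> t)"
    and dist: "distinct \<pi>" and lv: "length v > 0"
    and tl: "t \<le> length \<pi>"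
  shows "conf_out \<sigma> v \<pi> t = FF R v \<pi> t"
  using tl
proof (induction t rule: inc_induct)
  case base
  then show ?case using conf_out_end ok_end unfolding FF_def by simp
next
  case (step k)
  define i where "i = \<pi>!k"
  define w where "w = winner v"
  have st: "conf_out \<sigma> v \<pi> k = (if \<sigma> i v \<pi> k then pure w else conf_out \<sigma> v \<pi> (Suc k))"
    using conf_out_step[OF step(2)] unfolding i_def w_def .
  have okk: "ok R v \<pi> k = (R i = w \<or> ok R v \<pi> (Suc k))" using ok_step[OF step(2)] unfolding i_def w_def .
  have irr: "conf_out (\<sigma>(i := g)) v \<pi> (Suc k) = conf_out \<sigma> v \<pi> (Suc k)" for g
  proof (rule conf_out_upd, intro allI impI)
    fix s assume "Suc k \<le> s" "s < length \<pi>"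
    then show "\<pi>!s \<noteq> i" unfolding i_def using dist step(2) nth_eq_iff_index_eq by fastforce
  qed
  have dev: "\<not> sd_strict R i (conf_out (\<sigma>(i := g)) v \<pi> k) (conf_out \<sigma> v \<pi> k)" for g
    using spe step(2) unfolding i_def by blast
  show ?case
  proof (cases "beta v = pure w")
    case True
    then show ?thesis using conf_out_cases[of \<sigma> v \<pi> k] unfolding FF_def w_def by auto
  next
    case bnp: False
    have gt: "pure w (R i) > beta v (R i)" if "R i = w"
      using beta_not_pure(1)[OF lv bnp, of OA] beta_not_pure(1)[OF lv bnp, of OB] that
      by (cases w) (auto simp: pure_def)
    have lt: "pure w (R i) < beta v (R i)" if "R i \<noteq> w"
      using beta_not_pure(2)[OF lv bnp that] that by (auto simp: pure_def)
    show ?thesis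
    proof (cases "\<sigma> i v \<pi> k")
      case Y: True
      show ?thesis
      proof (cases "ok R v \<pi> k")
        case True then show ?thesis using Y st unfolding FF_def w_def by simp
      next
        case False
        then have "R i \<noteq> w" "\<not> ok R v \<pi> (Suc k)" using okk by auto
        have "conf_out (\<sigma>(i := (\<lambda>_ _ _. False))) v \<pi> k = conf_out (\<sigma>(i := (\<lambda>_ _ _. False))) v \<pi> (Suc k)"
          using conf_out_step[OF step(2), of "\<sigma>(i := (\<lambda>_ _ _. False))"] unfolding i_def by simp
        also have "\<dots> = beta v" using irr step(3) \<open>\<not> ok R v \<pi> (Suc k)\<close> unfolding FF_def by simp
        finally show ?thesis using dev[of "\<lambda>_ _ _. False"] Y st lt[OF \<open>R i \<noteq> w\<close>]
          unfolding sd_strict_def by simp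
      qed
    next
      case N: False
      show ?thesis
      proof (cases "ok R v \<pi> (Suc k)")
        case True then show ?thesis using N st okk step(3) unfolding FF_def w_def by simp
      next
        case nok: False
        show ?thesis
        proof (cases "R i = w")
          case True
          have "conf_out (\<sigma>(i := (\<lambda>_ _ _. True))) v \<pi> k = pure w"
            using conf_out_step[OF step(2), of "\<sigma>(i := (\<lambda>_ _ _. True))"] unfolding i_def w_def by simp
          then show ?thesis using dev[of "\<lambda>_ _ _. True"] N st step(3) nok gt[OF True]
            unfolding sd_strict_def FF_def by simp
        next
          case False
          then show ?thesis using N st step(3) nok okk unfolding FF_def by simp
        qed
      qed
    qed
  qed
qed

definition sinc :: "(nat \<Rightarrow> opt) \<Rightarrow> cstrat" where
  "sinc R = (\<lambda>i v \<pi> t. R i = winner v)"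

lemma sinc_out: "t \<le> length \<pi> \<Longrightarrow> conf_out (sinc R) v \<pi> t = FF R v \<pi> t"
proof (cases "ok R v \<pi> t")
  case True
  then obtain s where "t \<le> s" "s < length \<pi>" "R (\<pi>!s) = winner v" unfolding ok_def by auto
  then have "conf_aux (sinc R) v \<pi> t (length \<pi> - t) = pure (winner v)"
    by (intro conf_aux_Y[of t s]) (auto simp: sinc_def)
  then show ?thesis using True unfolding FF_def conf_out_def by simp
next
  case False
  assume "t \<le> length \<pi>"
  then have "conf_aux (sinc R) v \<pi> t (length \<pi> - t) = beta v" using False
    by (intro conf_aux_N) (auto simp: sinc_def ok_def)
  then show ?thesis using False unfolding FF_def conf_out_def by simp
qed

lemma sinc_spe_conf:
  assumes "t \<le> length \<pi>"
  shows "\<not> sd_strict R i (conf_out ((sinc R)(i := f)) v \<pi> t) (conf_out (sinc R) v \<pi> t)"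
proof -
  define w where "w = winner v"
  define D where "D = conf_out ((sinc R)(i := f)) v \<pi> t"
  have cur: "conf_out (sinc R) v \<pi> t = FF R v \<pi> t" using sinc_out[OF assms] .
  show ?thesis
  proof (cases "ok R v \<pi> t")
    case True
    then obtain s where s: "t \<le> s" "s < length \<pi>" "R (\<pi>!s) = w" unfolding ok_def w_def by auto
    show ?thesis
    proof (cases "R i = w")
      case True
      then show ?thesis using cur \<open>ok R v \<pi> t\<close> conf_out_le1
        unfolding sd_strict_def FF_def w_def by (simp add: pure_def not_less)
    next
      case False
      then have "\<pi>!s \<noteq> i" using s by auto
      then have "conf_aux ((sinc R)(i := f)) v \<pi> t (length \<pi> - t) = pure (winner v)" using s
        by (intro conf_aux_Y[of t s]) (auto simp: sinc_def w_def)
      then have "D = pure w" unfolding D_def conf_out_def w_def .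
      then show ?thesis using cur \<open>ok R v \<pi> t\<close> unfolding sd_strict_def FF_def w_def D_def by simp
    qed
  next
    case False
    show ?thesis
    proof (cases "R i = w")
      case True
      have "D = conf_out (sinc R) v \<pi> t" unfolding D_def
        using False True by (intro conf_out_upd) (auto simp: ok_def w_def)
      then show ?thesis unfolding D_def sd_strict_def by simp
    next
      case nw: False
      have "D (R i) \<le> beta v (R i)"
        using conf_out_cases[of "(sinc R)(i := f)" v \<pi> t] nw beta_nonneg
        unfolding D_def w_def pure_def by auto
      then show ?thesis using cur False unfolding D_def sd_strict_def FF_def by simp
    qed
  qed
qed



lemma finite_Comms: "finite (Comms p)"
proof -
  have "Comms p \<subseteq> {xs. set xs \<subseteq> {..<n_agents p} \<and> length xs = p + 1}" unfolding Comms_def by auto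
  then show ?thesis using finite_lists_length_eq[of "{..<n_agents p}" "p+1"] finite_subset by blast
qed

lemma Comms_ex: "[0..<p+1] \<in> Comms p" unfolding Comms_def n_agents_def by auto

lemma card_Comms_pos: "card (Comms p) > 0"
  using finite_Comms Comms_ex card_gt_0_iff by blast

lemma length_votes: "length (votes p s) = n_agents p" unfolding votes_def by simp

lemma vcount_votes: "vcount x (votes p s) = card {j. j < n_agents p \<and> s j = x}"
  unfolding vcount_def votes_def by (intro arg_cong[where f=card]) auto

lemma opt_other: "(x::opt) \<noteq> y \<Longrightarrow> z \<noteq> x \<Longrightarrow> z = y"
  by (cases x; cases y; cases z) auto

lemma opt_iff: "(x::opt) \<noteq> y \<Longrightarrow> (z = x) = (z \<noteq> y)"
  by (cases x; cases y; cases z) auto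

lemma maj_card: "card {j. j < n_agents p \<and> R j = Maj p R} \<ge> p + 1"
proof (cases "card {j. j < n_agents p \<and> R j = OA} \<ge> p + 1")
  case True
  have "Maj p R = OA" using True unfolding Maj_def by (simp only: if_True)
  then show ?thesis using True by (simp only:)
next
  case False
  have "{j. j < n_agents p \<and> \<not> R j = OA} = {j. j < n_agents p \<and> R j = OB}"
    using opt_iff[of OB OA] by simp
  moreover have "card {j. j < n_agents p \<and> R j = OA} + card {j. j < n_agents p \<and> \<not> R j = OA} = 2 * p + 1"
    using card_split[of "n_agents p" "\<lambda>j. R j = OA"] unfolding n_agents_def .
  moreover have "Maj p R = OB" using False unfolding Maj_def by (simp only: if_False)
  ultimately show ?thesis using False by (simp only:)
qed

lemma maj_other: "x \<noteq> Maj p R \<Longrightarrow> card {j. j < n_agents p \<and> R j = x} \<le> p"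
proof -
  assume x: "x \<noteq> Maj p R"
  have "{j. j < n_agents p \<and> R j = x} = {j. j < n_agents p \<and> \<not> R j = Maj p R}"
    using opt_iff[OF x] by simp
  moreover have "card {j. j < n_agents p \<and> R j = Maj p R} + card {j. j < n_agents p \<and> \<not> R j = Maj p R} = 2 * p + 1"
    using card_split[of "n_agents p" "\<lambda>j. R j = Maj p R"] unfolding n_agents_def .
  ultimately show ?thesis using maj_card[of p R] by (simp only:)
qed

lemma winner_ge: "length v = n_agents p \<Longrightarrow> vcount (winner v) v \<ge> p + 1"
  using vcount_sum[of v] unfolding winner_def n_agents_def by auto

lemma winner_of: "length v = n_agents p \<Longrightarrow> vcount x v \<ge> p + 1 \<Longrightarrow> winner v = x"
  using vcount_sum[of v] unfolding winner_def n_agents_def by (cases x) auto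

lemma comm_has:
  assumes "\<pi> \<in> Comms p" "card {j. j < n_agents p \<and> R j = x} \<ge> p + 1"
  shows "\<exists>j\<in>set \<pi>. R j = x"
proof (rule ccontr)
  assume "\<not> ?thesis"
  then have "set \<pi> \<subseteq> {j. j < n_agents p \<and> \<not> R j = x}" using assms(1) unfolding Comms_def by auto
  then have "card (set \<pi>) \<le> card {j. j < n_agents p \<and> \<not> R j = x}" by (intro card_mono) auto
  moreover have "card (set \<pi>) = p + 1" using assms(1) unfolding Comms_def by (simp add: distinct_card)
  moreover have "card {j. j < n_agents p \<and> R j = x} + card {j. j < n_agents p \<and> \<not> R j = x} = 2 * p + 1"
    using card_split[of "n_agents p" "\<lambda>j. R j = x"] unfolding n_agents_def .
  ultimately show False using assms(2) by linarith
qed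

lemma ok_all:
  assumes "\<pi> \<in> Comms p" "card {j. j < n_agents p \<and> R j = winner v} \<ge> p + 1"
  shows "ok R v \<pi> 0"
proof -
  obtain j where "j \<in> set \<pi>" "R j = winner v" using comm_has[OF assms] by blast
  then obtain s where "s < length \<pi>" "\<pi>!s = j" by (auto simp: in_set_conv_nth)
  then show ?thesis unfolding ok_def using \<open>R j = winner v\<close> by auto
qed

lemma chance_const:
  assumes "\<forall>\<pi>\<in>Comms p. conf_out \<sigma> v \<pi> 0 = pure x"
  shows "chance_out p \<sigma> v = pure x"
proof
  fix y
  have "(\<Sum>\<pi>\<in>Comms p. conf_out \<sigma> v \<pi> 0 y) = real (card (Comms p)) * pure x y"
    using assms by simp
  then show "chance_out p \<sigma> v y = pure x y" unfolding chance_out_def using card_Comms_pos[of p] by simp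
qed

lemma chance_le:
  assumes "\<forall>\<pi>\<in>Comms p. conf_out \<sigma>' v \<pi> 0 y \<le> conf_out \<sigma> v \<pi> 0 y"
  shows "chance_out p \<sigma>' v y \<le> chance_out p \<sigma> v y"
  unfolding chance_out_def using assms by (intro divide_right_mono sum_mono) auto

lemma chance_lt:
  assumes "\<forall>\<pi>\<in>Comms p. g \<pi> \<le> conf_out \<sigma> v \<pi> 0 y" "pz \<in> Comms p" "g pz < conf_out \<sigma> v pz 0 y"
    "\<forall>\<pi>\<in>Comms p. conf_out \<sigma>' v' \<pi> 0 y = g \<pi>"
  shows "chance_out p \<sigma>' v' y < chance_out p \<sigma> v y"
proof -
  have "(\<Sum>\<pi>\<in>Comms p. conf_out \<sigma>' v' \<pi> 0 y) = (\<Sum>\<pi>\<in>Comms p. g \<pi>)" using assms(4) by simp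
  also have "\<dots> < (\<Sum>\<pi>\<in>Comms p. conf_out \<sigma> v \<pi> 0 y)"
    using assms(1-3) finite_Comms by (intro sum_strict_mono_ex1) auto
  finally show ?thesis unfolding chance_out_def using card_Comms_pos[of p]
    by (intro divide_strict_right_mono) auto
qed



lemma chance_le1: "chance_out p \<sigma> v y \<le> 1"
proof -
  have "(\<Sum>\<pi>\<in>Comms p. conf_out \<sigma> v \<pi> 0 y) \<le> (\<Sum>\<pi>\<in>Comms p. 1)"
    by (intro sum_mono) (rule conf_out_le1)
  then show ?thesis unfolding chance_out_def using card_Comms_pos[of p] by simp
qed

lemma sinc_chance:
  assumes "winner v = Maj p R"
  shows "chance_out p (sinc R) v = pure (Maj p R)"
proof (rule chance_const, intro ballI)
  fix \<pi> assume \<pi>: "\<pi> \<in> Comms p"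
  have "length \<pi> = p + 1" using \<pi> unfolding Comms_def by simp
  then have "conf_out (sinc R) v \<pi> 0 = FF R v \<pi> 0" using sinc_out[of 0 \<pi> R v] by simp
  moreover have "ok R v \<pi> 0" using ok_all[OF \<pi>] maj_card[of p R] assms by simp
  ultimately show "conf_out (sinc R) v \<pi> 0 = pure (Maj p R)" unfolding FF_def using assms by simp
qed

lemma existence:
  "is_SPE p R R (sinc R) \<and> root_out p R (sinc R) = pure (Maj p R)"
proof -
  define m where "m = Maj p R"
  have c3: "\<not> sd_strict R i (conf_out ((sinc R)(i := f)) v \<pi> t) (conf_out (sinc R) v \<pi> t)"
    if "\<pi> \<in> Comms p" "t < p + 1" for i f v \<pi> t
    using that sinc_spe_conf[of t \<pi> R i f v] unfolding Comms_def by simp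
  have c2: "\<not> sd_strict R i (chance_out p ((sinc R)(i := f)) v) (chance_out p (sinc R) v)" for i f v
  proof -
    have "chance_out p ((sinc R)(i := f)) v (R i) \<le> chance_out p (sinc R) v (R i)"
      using c3[of _ 0 i f v] by (intro chance_le) (auto simp: sd_strict_def not_less)
    then show ?thesis unfolding sd_strict_def by simp
  qed
  have wv: "winner (votes p R) = m"
    using winner_of[of "votes p R" p m] length_votes[of p R] vcount_votes[of m p R] maj_card[of p R]
    unfolding m_def by simp
  have root: "root_out p R (sinc R) = pure m" unfolding root_out_def m_def using sinc_chance wv m_def by simp
  have c1: "\<not> sd_strict R i (root_out p (R(i := x)) ((sinc R)(i := f))) (root_out p R (sinc R))"
    if "i < n_agents p" for i x f
  proof -
    define v' where "v' = votes p (R(i := x))"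
    have a: "root_out p (R(i := x)) ((sinc R)(i := f)) (R i) \<le> chance_out p (sinc R) v' (R i)"
      using c2[of i f v'] unfolding root_out_def v'_def sd_strict_def by simp
    show ?thesis
    proof (cases "R i = m")
      case True
      then show ?thesis using root chance_le1[of p "sinc R" v' "R i"] a
        unfolding sd_strict_def by (simp add: pure_def)
    next
      case False
      have "{j. j < n_agents p \<and> R j = m} \<subseteq> {j. j < n_agents p \<and> (R(i := x)) j = m}"
        using False by auto
      then have "card {j. j < n_agents p \<and> R j = m} \<le> card {j. j < n_agents p \<and> (R(i := x)) j = m}"
        by (intro card_mono) auto
      then have "vcount m v' \<ge> p + 1" using maj_card[of p R] vcount_votes[of m p "R(i:=x)"]
        unfolding v'_def m_def by simp
      then have "winner v' = m" using winner_of[of v' p m] length_votes unfolding v'_def by simp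
      then have "chance_out p (sinc R) v' = pure m" using sinc_chance m_def by simp
      then show ?thesis using a root unfolding sd_strict_def by simp
    qed
  qed
  show ?thesis unfolding is_SPE_def using c1 c2 c3 root m_def by blast
qed



lemma necessity:
  assumes spe: "is_SPE p R \<sigma>v \<sigma>c"
  shows "root_out p \<sigma>v \<sigma>c = pure (Maj p R)"
proof -
  define m where "m = Maj p R"
  define N where "N = n_agents p"
  have S1: "\<forall>i < N. \<forall>x f. \<not> sd_strict R i (root_out p (\<sigma>v(i := x)) (\<sigma>c(i := f))) (root_out p \<sigma>v \<sigma>c)"
    using spe unfolding is_SPE_def N_def by blast
  have S3: "\<forall>v \<pi> t. length v = N \<and> \<pi> \<in> Comms p \<and> t < p + 1 \<longrightarrow> (\<forall>i < N. \<forall>f.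
        \<not> sd_strict R i (conf_out (\<sigma>c(i := f)) v \<pi> t) (conf_out \<sigma>c v \<pi> t))"
    using spe unfolding is_SPE_def N_def by blast
  have char: "conf_out \<sigma>c v \<pi> 0 = FF R v \<pi> 0" if "length v = N" "\<pi> \<in> Comms p" for v \<pi>
  proof (rule spe_conf)
    have lp: "length \<pi> = p + 1" and sp: "set \<pi> \<subseteq> {..<N}" and "distinct \<pi>"
      using that(2) unfolding Comms_def N_def by auto
    then show "distinct \<pi>" by simp
    show "0 < length v" using that(1) unfolding N_def n_agents_def by simp
    show "0 \<le> length \<pi>" by simp
    show "\<forall>t<length \<pi>. \<forall>f. \<not> sd_strict R (\<pi> ! t) (conf_out (\<sigma>c(\<pi> ! t := f)) v \<pi> t) (conf_out \<sigma>c v \<pi> t)"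
    proof (intro allI impI)
      fix t f assume t: "t < length \<pi>"
      then have "\<pi>!t < N" using sp nth_mem by blast
      then show "\<not> sd_strict R (\<pi> ! t) (conf_out (\<sigma>c(\<pi> ! t := f)) v \<pi> t) (conf_out \<sigma>c v \<pi> t)"
        using S3 that t lp by auto
    qed
  qed
  have winm: "chance_out p \<sigma>c v' = pure m" if "length v' = N" "winner v' = m" for v'
  proof (rule chance_const, intro ballI)
    fix \<pi> assume \<pi>: "\<pi> \<in> Comms p"
    have "ok R v' \<pi> 0" using ok_all[OF \<pi>] maj_card[of p R] that unfolding m_def by simp
    then show "conf_out \<sigma>c v' \<pi> 0 = pure m" using char[OF that(1) \<pi>] that unfolding FF_def by simp
  qed
  define v where "v = votes p \<sigma>v"
  have lv: "length v = N" unfolding v_def N_def by (rule length_votes)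
  show ?thesis
  proof (cases "winner v = m")
    case True
    then show ?thesis using winm[OF lv] unfolding root_out_def v_def m_def by simp
  next
    case False
    define o' where "o' = winner v"
    have om: "o' \<noteq> m" using False unfolding o'_def by simp
    have "vcount o' v \<ge> p + 1" using winner_ge[of v p] lv unfolding o'_def N_def by simp
    then have c1: "card {j. j < N \<and> \<sigma>v j = o'} \<ge> p + 1"
      using vcount_votes[of o' p \<sigma>v] unfolding v_def N_def by simp
    have c2: "card {j. j < N \<and> R j = o'} \<le> p" using maj_other[of o' p R] om unfolding m_def N_def by simp
    obtain i where i: "i < N" "\<sigma>v i = o'" "R i \<noteq> o'"
    proof (rule ccontr)
      assume "\<not> thesis"
      then have "{j. j < N \<and> \<sigma>v j = o'} \<subseteq> {j. j < N \<and> R j = o'}" using that by blast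
      then have "card {j. j < N \<and> \<sigma>v j = o'} \<le> card {j. j < N \<and> R j = o'}"
        by (intro card_mono) auto
      then show False using c1 c2 by simp
    qed
    have Rim: "R i = m" using opt_iff[OF om, of "R i"] i(3) by simp
    define v' where "v' = votes p (\<sigma>v(i := m))"
    have lv': "length v' = N" unfolding v'_def N_def by (rule length_votes)
    have "{j. j < N \<and> \<sigma>v j = m} \<subset> {j. j < N \<and> (\<sigma>v(i := m)) j = m}"
      using i om by auto
    then have "card {j. j < N \<and> \<sigma>v j = m} < card {j. j < N \<and> (\<sigma>v(i := m)) j = m}"
      by (intro psubset_card_mono) auto
    then have vc: "vcount m v < vcount m v'"
      using vcount_votes[of m p \<sigma>v] vcount_votes[of m p "\<sigma>v(i := m)"] unfolding v_def v'_def N_def by simp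
    have Npos: "N > 0" unfolding N_def n_agents_def by simp
    have bv: "beta v m < beta v' m" using vc lv lv' Npos unfolding beta_def
      by (simp add: divide_strict_right_mono)
    have "vcount m v + vcount o' v = N"
      using vcount_sum[of v] lv om by (cases m; cases o') auto
    then have "vcount m v < N" using \<open>vcount o' v \<ge> p + 1\<close> by simp
    then have bv1: "beta v m < 1" using lv Npos unfolding beta_def by simp
    obtain S where S: "S \<subseteq> {j. j < N \<and> R j = m}" "card S = p + 1" "finite S"
      using obtain_subset_with_card_n[of "p+1" "{j. j < N \<and> R j = m}"] maj_card[of p R]
      unfolding m_def N_def by blast
    define pz where "pz = sorted_list_of_set S"
    have pz: "pz \<in> Comms p" using S unfolding pz_def Comms_def N_def by auto
    have nok: "\<not> ok R v pz 0"
    proof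
      assume "ok R v pz 0"
      then obtain s where "s < length pz" "R (pz!s) = o'" unfolding ok_def o'_def by auto
      then have "pz!s \<in> S" using S unfolding pz_def by (metis nth_mem set_sorted_list_of_set)
      then show False using S \<open>R (pz!s) = o'\<close> om by auto
    qed
    have FFv: "FF R v \<pi> 0 m = (if ok R v \<pi> 0 then 0 else beta v m)" for \<pi>
      unfolding FF_def o'_def[symmetric] using om by (simp add: pure_def)
    have key: "FF R v \<pi> 0 m \<le> conf_out \<sigma>c v' \<pi> 0 m \<and> (\<pi> = pz \<longrightarrow> FF R v \<pi> 0 m < conf_out \<sigma>c v' \<pi> 0 m)"
      if \<pi>: "\<pi> \<in> Comms p" for \<pi>
    proof (cases "winner v' = m")
      case True
      have "conf_out \<sigma>c v' \<pi> 0 m = 1" using winm[OF lv' True] char[OF lv' \<pi>] chance_const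
        using ok_all[OF \<pi>] maj_card[of p R] True unfolding m_def FF_def by (simp add: pure_def)
      then show ?thesis using FFv[of \<pi>] bv1 beta_le1[of v m] nok by auto
    next
      case False
      then have wo: "winner v' = o'" using opt_iff[OF om] by simp
      have "ok R v' \<pi> 0 = ok R v \<pi> 0" unfolding ok_def wo o'_def ..
      then have "conf_out \<sigma>c v' \<pi> 0 m = (if ok R v \<pi> 0 then 0 else beta v' m)"
        using char[OF lv' \<pi>] wo om unfolding FF_def by (simp add: pure_def)
      then show ?thesis using FFv[of \<pi>] bv nok by auto
    qed
    have "chance_out p \<sigma>c v m < chance_out p \<sigma>c v' m"
    proof (rule chance_lt[where g = "\<lambda>\<pi>. FF R v \<pi> 0 m" and pz = pz])
      show "\<forall>\<pi>\<in>Comms p. FF R v \<pi> 0 m \<le> conf_out \<sigma>c v' \<pi> 0 m" using key by blast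
      show "pz \<in> Comms p" by (rule pz)
      show "FF R v pz 0 m < conf_out \<sigma>c v' pz 0 m" using key[OF pz] by blast
      show "\<forall>\<pi>\<in>Comms p. conf_out \<sigma>c v \<pi> 0 m = FF R v \<pi> 0 m" using char[OF lv] by simp
    qed
    moreover have "\<not> sd_strict R i (root_out p (\<sigma>v(i := m)) (\<sigma>c(i := \<sigma>c i))) (root_out p \<sigma>v \<sigma>c)"
      using S1 i(1) by blast
    ultimately show ?thesis unfolding sd_strict_def root_out_def v_def v'_def Rim by simp
  qed
qed

theorem proposition2:
  fixes p :: nat and R :: "nat \<Rightarrow> opt"
  shows "(\<forall>\<sigma>v \<sigma>c. is_SPE p R \<sigma>v \<sigma>c \<longrightarrow> root_out p \<sigma>v \<sigma>c = pure (Maj p R)) \<and>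
         (\<exists>\<sigma>v \<sigma>c. is_SPE p R \<sigma>v \<sigma>c \<and> root_out p \<sigma>v \<sigma>c = pure (Maj p R))"
  using necessity existence by blast


end
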